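(* Let $n=2k+1$ with $k\ge 2$. Then $W=\{a_1,a_{k+1}\}$ is a local resolving set of $S_n$.
   Context: For $n\ge 3$, $S_n$ is the graph with vertex set $\{a_i,b_i,c_i,d_i : 1\le i\le n\}$ and edge set $\{a_ia_{i+1}, b_ib_{i+1}, c_ic_{i+1}, d_id_{i+1}, a_{i+1}b_i, a_ib_i, b_ic_i, c_id_i : 1\le i\le n\}$, indices taken modulo $n$. A vertex $w$ resolves $u,v$ if $d(u,w)\neq d(v,w)$ ($d$ the graph distance). A set $W$ is a local resolving set if every two adjacent vertices are resolved by some element of $W$. *)

theory Defs
  imports Main
begin

fun walk :: "('a \<Rightarrow> 'a \<Rightarrow> bool) \<Rightarrow> 'a list \<Rightarrow> bool" where
  "walk E [] = False"
| "walk E [x] = True"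
| "walk E (x # y # ys) = (E x y \<and> walk E (y # ys))"

definition gdist :: "('a \<Rightarrow> 'a \<Rightarrow> bool) \<Rightarrow> 'a \<Rightarrow> 'a \<Rightarrow> nat" where
  "gdist E u v = (LEAST m. \<exists>xs. walk E xs \<and> hd xs = u \<and> last xs = v \<and> length xs = Suc m)"

definition resolves :: "('a \<Rightarrow> 'a \<Rightarrow> bool) \<Rightarrow> 'a \<Rightarrow> 'a \<Rightarrow> 'a \<Rightarrow> bool" where
  "resolves E w u v \<longleftrightarrow> gdist E u w \<noteq> gdist E v w"

definition local_resolving_set ::
  "'a set \<Rightarrow> ('a \<Rightarrow> 'a \<Rightarrow> bool) \<Rightarrow> 'a set \<Rightarrow> bool" where
  "local_resolving_set V E W \<longleftrightarrow> W \<subseteq> V \<and>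
     (\<forall>u\<in>V. \<forall>v\<in>V. E u v \<longrightarrow> (\<exists>w\<in>W. resolves E w u v))"

text \<open>The graph S_n. Vertex a_i is (A, i-1) etc., indices 0..n-1 (i.e. i mod n).\<close>
datatype layer = LA | LB | LC | LD

definition S_verts :: "nat \<Rightarrow> (layer \<times> nat) set" where
  "S_verts n = UNIV \<times> {..<n}"

definition S_edge0 :: "nat \<Rightarrow> layer \<times> nat \<Rightarrow> layer \<times> nat \<Rightarrow> bool" where
  "S_edge0 n u v \<longleftrightarrow> (\<exists>i<n.
      (u = (LA, i) \<and> v = (LA, Suc i mod n))
    \<or> (u = (LB, i) \<and> v = (LB, Suc i mod n))
    \<or> (u = (LC, i) \<and> v = (LC, Suc i mod n))
    \<or> (u = (LD, i) \<and> v = (LD, Suc i mod n))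
    \<or> (u = (LA, Suc i mod n) \<and> v = (LB, i))
    \<or> (u = (LA, i) \<and> v = (LB, i))
    \<or> (u = (LB, i) \<and> v = (LC, i))
    \<or> (u = (LC, i) \<and> v = (LD, i)))"

definition S_edge :: "nat \<Rightarrow> layer \<times> nat \<Rightarrow> layer \<times> nat \<Rightarrow> bool" where
  "S_edge n u v \<longleftrightarrow> S_edge0 n u v \<or> S_edge0 n v u"

end

theory Submission
  imports Defs
begin

lemma walk_lower:
  "(\<forall>x y. E x y \<longrightarrow> f x \<le> f y + 1) \<Longrightarrow> walk E xs \<Longrightarrow> f (hd xs) \<le> f (last xs) + (length xs - 1)"
  by (induction E xs rule: walk.induct) fastforce+

lemma walk_exists:
  assumes "\<forall>v\<in>V. v \<noteq> s \<longrightarrow> (\<exists>u\<in>V. E v u \<and> f u + 1 = f v)" "f s = 0"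
  shows "v \<in> V \<Longrightarrow> f v = m \<Longrightarrow> \<exists>xs. walk E xs \<and> hd xs = v \<and> last xs = s \<and> length xs = Suc m"
proof (induction m arbitrary: v)
  case 0
  then have "v = s" using assms by fastforce
  then show ?case by (intro exI[of _ "[v]"]) simp
next
  case (Suc m)
  then have "v \<noteq> s" using assms by auto
  then obtain u where u: "u \<in> V" "E v u" "f u + 1 = f v" using assms Suc.prems by blast
  then obtain xs where xs: "walk E xs" "hd xs = u" "last xs = s" "length xs = Suc m"
    using Suc by auto
  then have "xs \<noteq> []" by auto
  then obtain y ys where "xs = y # ys" by (cases xs) auto
  then show ?case using xs u by (intro exI[of _ "v # xs"]) auto
qed

lemma gdist_eq:
  assumes "\<forall>x y. E x y \<longrightarrow> f x \<le> f y + 1"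
    "\<forall>v\<in>V. v \<noteq> s \<longrightarrow> (\<exists>u\<in>V. E v u \<and> f u + 1 = f v)" "f s = 0" "v \<in> V"
  shows "gdist E v s = f v"
  unfolding gdist_def
proof (rule Least_equality)
  show "\<exists>xs. walk E xs \<and> hd xs = v \<and> last xs = s \<and> length xs = Suc (f v)"
    using walk_exists[OF assms(2,3) assms(4)] by blast
next
  fix m assume "\<exists>xs. walk E xs \<and> hd xs = v \<and> last xs = s \<and> length xs = Suc m"
  then obtain xs where "walk E xs" "hd xs = v" "last xs = s" "length xs = Suc m" by blast
  then show "f v \<le> m" using walk_lower[OF assms(1), of xs] assms(3) by simp
qed

fun F :: "nat \<Rightarrow> layer \<times> nat \<Rightarrow> nat" where
  "F k (LA, i) = (if i \<le> k then i else 2*k+1-i)"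
| "F k (LB, i) = (if i \<le> k then i+1 else 2*k+1-i)"
| "F k (LC, i) = (if i \<le> k then i+1 else 2*k+1-i) + 1"
| "F k (LD, i) = (if i \<le> k then i+1 else 2*k+1-i) + 2"

fun G :: "nat \<Rightarrow> layer \<times> nat \<Rightarrow> nat" where
  "G k (LA, i) = (if i \<le> k then k-i else i-k)"
| "G k (LB, i) = (if i < k then k-i else i-k+1)"
| "G k (LC, i) = (if i < k then k-i else i-k+1) + 1"
| "G k (LD, i) = (if i < k then k-i else i-k+1) + 2"

lemma sucmod: "i < 2*k+1 \<Longrightarrow> Suc i mod (2*k+1) = (if i = 2*k then 0 else Suc i)"
  by auto

lemma edge0_cases:
  assumes "S_edge0 (2*k+1) u v"
  shows "\<exists>i<2*k+1. let j = (if i = 2*k then 0 else Suc i) in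
      (u = (LA, i) \<and> v = (LA, j))
    \<or> (u = (LB, i) \<and> v = (LB, j))
    \<or> (u = (LC, i) \<and> v = (LC, j))
    \<or> (u = (LD, i) \<and> v = (LD, j))
    \<or> (u = (LA, j) \<and> v = (LB, i))
    \<or> (u = (LA, i) \<and> v = (LB, i))
    \<or> (u = (LB, i) \<and> v = (LC, i))
    \<or> (u = (LC, i) \<and> v = (LD, i))"
proof -
  obtain i where i: "i < 2*k+1" and c: "(u = (LA, i) \<and> v = (LA, Suc i mod (2*k+1)))
    \<or> (u = (LB, i) \<and> v = (LB, Suc i mod (2*k+1)))
    \<or> (u = (LC, i) \<and> v = (LC, Suc i mod (2*k+1)))
    \<or> (u = (LD, i) \<and> v = (LD, Suc i mod (2*k+1)))
    \<or> (u = (LA, Suc i mod (2*k+1)) \<and> v = (LB, i))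
    \<or> (u = (LA, i) \<and> v = (LB, i))
    \<or> (u = (LB, i) \<and> v = (LC, i))
    \<or> (u = (LC, i) \<and> v = (LD, i))"
    using assms unfolding S_edge0_def by blast
  have "Suc i mod (2*k+1) = (if i = 2*k then 0 else Suc i)" using sucmod[OF i] .
  then show ?thesis using i c unfolding Let_def by (intro exI[of _ i]) simp
qed

lemma edge0_obt:
  assumes "S_edge0 (2*k+1) u v"
  obtains i where "i < 2*k+1" "(u = (LA, i) \<and> v = (LA, (if i = 2*k then 0 else Suc i)))
    \<or> (u = (LB, i) \<and> v = (LB, (if i = 2*k then 0 else Suc i)))
    \<or> (u = (LC, i) \<and> v = (LC, (if i = 2*k then 0 else Suc i)))
    \<or> (u = (LD, i) \<and> v = (LD, (if i = 2*k then 0 else Suc i)))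
    \<or> (u = (LA, (if i = 2*k then 0 else Suc i)) \<and> v = (LB, i))
    \<or> (u = (LA, i) \<and> v = (LB, i))
    \<or> (u = (LB, i) \<and> v = (LC, i))
    \<or> (u = (LC, i) \<and> v = (LD, i))"
  using edge0_cases[OF assms] unfolding Let_def by blast

lemma F_lip: assumes "k \<ge> 2" "S_edge0 (2*k+1) u v"
  shows "F k u \<le> F k v + 1 \<and> F k v \<le> F k u + 1"
proof -
  obtain i where i: "i < 2*k+1" and c: "(u = (LA, i) \<and> v = (LA, (if i = 2*k then 0 else Suc i)))
    \<or> (u = (LB, i) \<and> v = (LB, (if i = 2*k then 0 else Suc i)))
    \<or> (u = (LC, i) \<and> v = (LC, (if i = 2*k then 0 else Suc i)))
    \<or> (u = (LD, i) \<and> v = (LD, (if i = 2*k then 0 else Suc i)))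
    \<or> (u = (LA, (if i = 2*k then 0 else Suc i)) \<and> v = (LB, i))
    \<or> (u = (LA, i) \<and> v = (LB, i))
    \<or> (u = (LB, i) \<and> v = (LC, i))
    \<or> (u = (LC, i) \<and> v = (LD, i))" using edge0_obt[OF assms(2)] by blast
  show ?thesis
  proof (cases "i = 2*k")
    case True
    then show ?thesis using c assms(1) by auto
  next
    case False
    then have j: "(if i = 2*k then 0 else Suc i) = Suc i" by simp
    show ?thesis using c i assms(1) unfolding j by (elim disjE) auto
  qed
qed

lemma G_lip: assumes "k \<ge> 2" "S_edge0 (2*k+1) u v"
  shows "G k u \<le> G k v + 1 \<and> G k v \<le> G k u + 1"
proof -
  obtain i where i: "i < 2*k+1" and c: "(u = (LA, i) \<and> v = (LA, (if i = 2*k then 0 else Suc i)))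
    \<or> (u = (LB, i) \<and> v = (LB, (if i = 2*k then 0 else Suc i)))
    \<or> (u = (LC, i) \<and> v = (LC, (if i = 2*k then 0 else Suc i)))
    \<or> (u = (LD, i) \<and> v = (LD, (if i = 2*k then 0 else Suc i)))
    \<or> (u = (LA, (if i = 2*k then 0 else Suc i)) \<and> v = (LB, i))
    \<or> (u = (LA, i) \<and> v = (LB, i))
    \<or> (u = (LB, i) \<and> v = (LC, i))
    \<or> (u = (LC, i) \<and> v = (LD, i))" using edge0_obt[OF assms(2)] by blast
  show ?thesis
  proof (cases "i = 2*k")
    case True
    then show ?thesis using c assms(1) by auto
  next
    case False
    then have j: "(if i = 2*k then 0 else Suc i) = Suc i" by simp
    show ?thesis using c i assms(1) unfolding j by (elim disjE) auto
  qed
qed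

lemma FG_res: assumes "k \<ge> 2" "S_edge0 (2*k+1) u v"
  shows "F k u \<noteq> F k v \<or> G k u \<noteq> G k v"
proof -
  obtain i where i: "i < 2*k+1" and c: "(u = (LA, i) \<and> v = (LA, (if i = 2*k then 0 else Suc i)))
    \<or> (u = (LB, i) \<and> v = (LB, (if i = 2*k then 0 else Suc i)))
    \<or> (u = (LC, i) \<and> v = (LC, (if i = 2*k then 0 else Suc i)))
    \<or> (u = (LD, i) \<and> v = (LD, (if i = 2*k then 0 else Suc i)))
    \<or> (u = (LA, (if i = 2*k then 0 else Suc i)) \<and> v = (LB, i))
    \<or> (u = (LA, i) \<and> v = (LB, i))
    \<or> (u = (LB, i) \<and> v = (LC, i))
    \<or> (u = (LC, i) \<and> v = (LD, i))" using edge0_obt[OF assms(2)] by blast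
  show ?thesis
  proof (cases "i = 2*k")
    case True
    then show ?thesis using c assms(1) by auto
  next
    case False
    then have j: "(if i = 2*k then 0 else Suc i) = Suc i" by simp
    show ?thesis using c i assms(1) unfolding j by (elim disjE) auto
  qed
qed


lemma edges:
  assumes "i < 2*k+1" "j = (if i = 2*k then 0 else Suc i)"
  shows "S_edge (2*k+1) (L,i) (L,j)" "S_edge (2*k+1) (L,j) (L,i)"
    "S_edge (2*k+1) (LA,j) (LB,i)" "S_edge (2*k+1) (LB,i) (LA,j)"
    "S_edge (2*k+1) (LA,i) (LB,i)" "S_edge (2*k+1) (LB,i) (LA,i)"
    "S_edge (2*k+1) (LB,i) (LC,i)" "S_edge (2*k+1) (LC,i) (LB,i)"
    "S_edge (2*k+1) (LC,i) (LD,i)" "S_edge (2*k+1) (LD,i) (LC,i)"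
proof -
  have m: "Suc i mod (2*k+1) = j" using sucmod[OF assms(1)] assms(2) by simp
  have e: "S_edge0 (2*k+1) (L,i) (L,j)" using assms(1) m unfolding S_edge0_def
    by (cases L) (auto intro!: exI[of _ i])
  show "S_edge (2*k+1) (L,i) (L,j)" "S_edge (2*k+1) (L,j) (L,i)"
    using e unfolding S_edge_def by auto
  show "S_edge (2*k+1) (LA,j) (LB,i)" "S_edge (2*k+1) (LB,i) (LA,j)"
    "S_edge (2*k+1) (LA,i) (LB,i)" "S_edge (2*k+1) (LB,i) (LA,i)"
    "S_edge (2*k+1) (LB,i) (LC,i)" "S_edge (2*k+1) (LC,i) (LB,i)"
    "S_edge (2*k+1) (LC,i) (LD,i)" "S_edge (2*k+1) (LD,i) (LC,i)"
    using assms(1) m unfolding S_edge_def S_edge0_def by (auto intro!: exI[of _ i])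
qed

lemma F_desc: assumes "k \<ge> 2"
  shows "\<forall>v\<in>S_verts (2*k+1). v \<noteq> (LA,0) \<longrightarrow> (\<exists>u\<in>S_verts (2*k+1). S_edge (2*k+1) v u \<and> F k u + 1 = F k v)"
proof (intro ballI impI)
  fix v assume v: "v \<in> S_verts (2*k+1)" "v \<noteq> (LA,0)"
  obtain L i where Li: "v = (L,i)" "i < 2*k+1" using v unfolding S_verts_def by auto
  define j where "j = (if i = 2*k then 0 else Suc i)"
  have jl: "j < 2*k+1" unfolding j_def using Li by auto
  note E = edges[OF Li(2) j_def]
  show "\<exists>u\<in>S_verts (2*k+1). S_edge (2*k+1) v u \<and> F k u + 1 = F k v"
  proof (cases L)
    case LA
    show ?thesis
    proof (cases "i \<le> k")
      case True
      then have "i > 0" using v Li LA by auto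
      then have "i - 1 < 2*k+1" "i = (if i - 1 = 2*k then 0 else Suc (i-1))" using Li by auto
      note E2 = edges(2)[OF this, of LA]
      show ?thesis using E2 True \<open>i>0\<close> Li LA unfolding S_verts_def
        by (intro bexI[of _ "(LA, i-1)"]) auto
    next
      case False
      show ?thesis using E(1)[of LA] False Li LA jl unfolding S_verts_def j_def
        by (intro bexI[of _ "(LA, j)"]) (auto simp: j_def)
    qed
  next
    case LB
    show ?thesis
    proof (cases "i \<le> k")
      case True
      show ?thesis using E(6) True Li LB unfolding S_verts_def
        by (intro bexI[of _ "(LA, i)"]) auto
    next
      case False
      show ?thesis using E(4) False Li LB jl unfolding S_verts_def
        by (intro bexI[of _ "(LA, j)"]) (auto simp: j_def)
    qed
  next
    case LC
    show ?thesis using E(8) Li LC unfolding S_verts_def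
        by (intro bexI[of _ "(LB, i)"]) auto
  next
    case LD
    show ?thesis using E(10) Li LD unfolding S_verts_def
        by (intro bexI[of _ "(LC, i)"]) auto
  qed
qed

lemma G_desc: assumes "k \<ge> 2"
  shows "\<forall>v\<in>S_verts (2*k+1). v \<noteq> (LA,k) \<longrightarrow> (\<exists>u\<in>S_verts (2*k+1). S_edge (2*k+1) v u \<and> G k u + 1 = G k v)"
proof (intro ballI impI)
  fix v assume v: "v \<in> S_verts (2*k+1)" "v \<noteq> (LA,k)"
  obtain L i where Li: "v = (L,i)" "i < 2*k+1" using v unfolding S_verts_def by auto
  define j where "j = (if i = 2*k then 0 else Suc i)"
  have jl: "j < 2*k+1" unfolding j_def using Li by auto
  note E = edges[OF Li(2) j_def]
  show "\<exists>u\<in>S_verts (2*k+1). S_edge (2*k+1) v u \<and> G k u + 1 = G k v"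
  proof (cases L)
    case LA
    show ?thesis
    proof (cases "i < k")
      case True
      show ?thesis using E(1)[of LA] True Li LA jl unfolding S_verts_def j_def
        by (intro bexI[of _ "(LA, j)"]) (auto simp: j_def)
    next
      case False
      then have "i > k" using v Li LA by auto
      then have "i - 1 < 2*k+1" "i = (if i - 1 = 2*k then 0 else Suc (i-1))" using Li by auto
      note E2 = edges(2)[OF this, of LA]
      show ?thesis using E2 \<open>i>k\<close> Li LA unfolding S_verts_def
        by (intro bexI[of _ "(LA, i-1)"]) auto
    qed
  next
    case LB
    show ?thesis
    proof (cases "i < k")
      case True
      show ?thesis using E(4) True Li LB jl unfolding S_verts_def
        by (intro bexI[of _ "(LA, j)"]) (auto simp: j_def)
    next
      case False
      show ?thesis using E(6) False Li LB unfolding S_verts_def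
        by (intro bexI[of _ "(LA, i)"]) auto
    qed
  next
    case LC
    show ?thesis using E(8) Li LC unfolding S_verts_def
        by (intro bexI[of _ "(LB, i)"]) auto
  next
    case LD
    show ?thesis using E(10) Li LD unfolding S_verts_def
        by (intro bexI[of _ "(LC, i)"]) auto
  qed
qed

theorem lemma3p5:
  fixes k n :: nat
  assumes "k \<ge> 2" and "n = 2 * k + 1"
  shows "local_resolving_set (S_verts n) (S_edge n) {(LA, 0), (LA, k)}"
proof -
  have Fl: "\<forall>x y. S_edge n x y \<longrightarrow> F k x \<le> F k y + 1"
    using F_lip[OF assms(1)] assms(2) unfolding S_edge_def by blast
  have Gl: "\<forall>x y. S_edge n x y \<longrightarrow> G k x \<le> G k y + 1"
    using G_lip[OF assms(1)] assms(2) unfolding S_edge_def by blast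
  have F0: "F k (LA,0) = 0" by simp
  have G0: "G k (LA,k) = 0" by simp
  have dF: "\<And>v. v \<in> S_verts n \<Longrightarrow> gdist (S_edge n) v (LA,0) = F k v"
    using gdist_eq[OF Fl _ F0] F_desc[OF assms(1)] assms(2) by blast
  have dG: "\<And>v. v \<in> S_verts n \<Longrightarrow> gdist (S_edge n) v (LA,k) = G k v"
    using gdist_eq[OF Gl _ G0] G_desc[OF assms(1)] assms(2) by blast
  have sub: "{(LA, 0), (LA, k)} \<subseteq> S_verts n" using assms unfolding S_verts_def by auto
  show ?thesis unfolding local_resolving_set_def
  proof (intro conjI sub ballI impI)
    fix u v assume uv: "u \<in> S_verts n" "v \<in> S_verts n" "S_edge n u v"
    have "F k u \<noteq> F k v \<or> G k u \<noteq> G k v"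
      using uv(3) FG_res[OF assms(1)] assms(2) unfolding S_edge_def by metis
    then show "\<exists>w\<in>{(LA, 0), (LA, k)}. resolves (S_edge n) w u v"
      unfolding resolves_def using dF[OF uv(1)] dF[OF uv(2)] dG[OF uv(1)] dG[OF uv(2)] by auto
  qed
qed

end
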